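(* Let $m\ge 2$, $\epsilon>0$, and $\varphi_j=2^{-j}$ for $j\ge 0$. For $j=1,\dots,m$ let $\beta_j,\beta_j':[0,1]\to\mathbb{R}$ be functions such that for all $x\in[0,1]$: $\beta_j(x)^2+\beta_j'(x)^2=1$; if $0\le x\le\varphi_j$ then $\beta_j(x)^2\le\epsilon^2$; and if $2\varphi_j\le x\le 1$ then $\beta_j(x)^2\ge 1-\epsilon^2$. Define $B_j'(x)=\prod_{i=1}^{j}\beta_i'(x)$ (with $B_0'\equiv 1$) and $B_j(x)=B_{j-1}'(x)\beta_j(x)$. Then for every $j$ with $1\le j\le m-1$ and every $x\in[\varphi_j,\varphi_{j-1})$, $$B_j(x)^2+B_{j+1}(x)^2\ge 1-\mathcal{O}(j\epsilon^2).$$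
   Context: $\mathcal{O}(\cdot)$ hides an absolute constant. *)

theory Defs
  imports Complex_Main
begin

definition phi :: "nat \<Rightarrow> real" where
  "phi j = (1/2) ^ j"

definition Bprime :: "(nat \<Rightarrow> real \<Rightarrow> real) \<Rightarrow> nat \<Rightarrow> real \<Rightarrow> real" where
  "Bprime beta' j x = (\<Prod>i=1..j. beta' i x)"

definition Bfun :: "(nat \<Rightarrow> real \<Rightarrow> real) \<Rightarrow> (nat \<Rightarrow> real \<Rightarrow> real) \<Rightarrow> nat \<Rightarrow> real \<Rightarrow> real" where
  "Bfun beta beta' j x = Bprime beta' (j - 1) x * beta j x"

end

theory Submission
  imports Defs
begin

lemma phi_mono: "i \<le> k \<Longrightarrow> phi k \<le> phi i"
  unfolding phi_def by (simp add: power_decreasing)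

lemma phi_pos: "0 < phi i" unfolding phi_def by simp

lemma phi_le1: "phi i \<le> 1" unfolding phi_def by (simp add: power_le_one)

lemma Bprime_Suc: "Bprime b (Suc k) x = Bprime b k x * b (Suc k) x"
  unfolding Bprime_def by (simp add: prod.nat_ivl_Suc')

lemma key:
  fixes e :: real
  assumes j1: "1 \<le> j" and jm: "j + 1 \<le> m" and e: "e > 0"
    and H: "\<forall>j\<in>{1..m}. \<forall>x\<in>{0..1}.
        (beta j x)^2 + (beta' j x)^2 = 1
      \<and> (x \<le> phi j \<longrightarrow> (beta j x)^2 \<le> e^2)
      \<and> (2 * phi j \<le> x \<longrightarrow> (beta j x)^2 \<ge> 1 - e^2)"
    and x1: "phi j \<le> x" and x2: "x < phi (j - 1)"
  shows "(Bfun beta beta' j x)^2 + (Bfun beta beta' (j + 1) x)^2 \<ge> 1 - 1 * real j * e^2"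
proof (cases "e^2 \<le> 1")
  case False
  have "1 * e^2 \<le> real j * e^2"
    by (rule mult_right_mono) (use j1 in auto)
  hence "1 - 1 * real j * e^2 < 0" using False by simp
  moreover have "0 \<le> (Bfun beta beta' j x)^2 + (Bfun beta beta' (j + 1) x)^2"
    by simp
  ultimately show ?thesis by linarith
next
  case True
  define a where "a = 1 - e^2"
  have a0: "0 \<le> a" and a1: "a \<le> 1" using True unfolding a_def by auto
  have x01: "x \<in> {0..1}" using x1 x2 phi_pos[of j] phi_le1[of "j-1"] by auto
  have pr: "\<And>i. i \<in> {1..j-1} \<Longrightarrow> a \<le> (beta' i x)^2 \<and> 0 \<le> a"
  proof -
    fix i assume i: "i \<in> {1..j-1}"
    have "x \<le> phi i" using x2 phi_mono[of i "j-1"] i by auto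
    moreover have "i \<in> {1..m}" using i jm by auto
    ultimately have "(beta i x)^2 \<le> e^2" "(beta i x)^2 + (beta' i x)^2 = 1" using H x01 by auto
    then show "a \<le> (beta' i x)^2 \<and> 0 \<le> a" using a0 unfolding a_def by linarith
  qed
  have "(\<Prod>i\<in>{1..j-1}. a) \<le> (\<Prod>i\<in>{1..j-1}. (beta' i x)^2)"
    by (rule prod_mono) (use pr in auto)
  hence P: "a ^ (j-1) \<le> (Bprime beta' (j-1) x)^2"
    unfolding Bprime_def by (simp add: prod_power_distrib)
  have jin: "j \<in> {1..m}" "j+1 \<in> {1..m}" using j1 jm by auto
  have eq1: "(beta j x)^2 + (beta' j x)^2 = 1" using H jin x01 by blast
  have "2 * phi (j+1) \<le> x" using x1 unfolding phi_def by simp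
  hence b2: "a \<le> (beta (j+1) x)^2" using H jin x01 unfolding a_def by blast
  obtain k where k: "j = Suc k" using j1 by (cases j) auto
  have BB: "Bprime beta' j x = Bprime beta' (j-1) x * beta' j x"
    using k Bprime_Suc by simp
  have "(Bfun beta beta' j x)^2 + (Bfun beta beta' (j + 1) x)^2
     = (Bprime beta' (j-1) x)^2 * ((beta j x)^2 + (beta' j x)^2 * (beta (j+1) x)^2)"
  proof -
    have e2: "Bfun beta beta' (j+1) x = Bprime beta' (j-1) x * beta' j x * beta (j+1) x"
      unfolding Bfun_def using BB by simp
    have e1: "Bfun beta beta' j x = Bprime beta' (j-1) x * beta j x"
      unfolding Bfun_def by simp
    show ?thesis unfolding e1 e2 by (simp only: power_mult_distrib distrib_left mult.assoc)
  qed
  also have "\<dots> \<ge> a^(j-1) * a"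
  proof (rule mult_mono)
    show "a \<le> (beta j x)^2 + (beta' j x)^2 * (beta (j+1) x)^2"
    proof -
      have "(beta' j x)^2 * a \<le> (beta' j x)^2 * (beta (j+1) x)^2"
        using b2 by (simp add: mult_left_mono)
      moreover have "a \<le> (beta j x)^2 + (beta' j x)^2 * a"
      proof -
        have c: "(beta' j x)^2 = 1 - (beta j x)^2" using eq1 by linarith
        have "a * (beta j x)^2 \<le> (beta j x)^2"
          by (rule mult_left_le_one_le) (use a0 a1 in auto)
        moreover have "(1 - (beta j x)^2) * a = a - a * (beta j x)^2"
          by (simp add: algebra_simps)
        ultimately show ?thesis unfolding c by linarith
      qed
      ultimately show ?thesis by linarith
    qed
  qed (use P a0 in auto)
  finally have F: "a ^ (j-1) * a \<le> (Bfun beta beta' j x)^2 + (Bfun beta beta' (j + 1) x)^2" .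
  have aj: "a ^ j = a ^ (j-1) * a" unfolding k by (simp only: power_Suc2 diff_Suc_1)
  have "1 + real j * (-(e^2)) \<le> (1 + -(e^2)) ^ j"
    by (rule Bernoulli_inequality) (use True in auto)
  moreover have "1 + -(e^2) = a" unfolding a_def by simp
  ultimately have "1 + real j * (-(e^2)) \<le> a ^ j" by simp
  then show ?thesis using F aj by linarith
qed

theorem lemma8:
  shows "\<exists>C::real. \<forall>(m::nat) (\<epsilon>::real) (beta::nat \<Rightarrow> real \<Rightarrow> real) (beta'::nat \<Rightarrow> real \<Rightarrow> real).
    m \<ge> 2 \<longrightarrow> \<epsilon> > 0 \<longrightarrow>
    (\<forall>j\<in>{1..m}. \<forall>x\<in>{0..1}.
        (beta j x)^2 + (beta' j x)^2 = 1
      \<and> (x \<le> phi j \<longrightarrow> (beta j x)^2 \<le> \<epsilon>^2)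
      \<and> (2 * phi j \<le> x \<longrightarrow> (beta j x)^2 \<ge> 1 - \<epsilon>^2)) \<longrightarrow>
    (\<forall>j x. 1 \<le> j \<and> j \<le> m - 1 \<and> phi j \<le> x \<and> x < phi (j - 1) \<longrightarrow>
       (Bfun beta beta' j x)^2 + (Bfun beta beta' (j + 1) x)^2 \<ge> 1 - C * real j * \<epsilon>^2)"
proof (rule exI[of _ 1], intro allI impI)
  fix m :: nat and e :: real and beta beta' :: "nat \<Rightarrow> real \<Rightarrow> real" and j :: nat and x :: real
  assume m: "m \<ge> 2" and e: "e > 0"
    and H: "\<forall>j\<in>{1..m}. \<forall>x\<in>{0..1}.
        (beta j x)^2 + (beta' j x)^2 = 1
      \<and> (x \<le> phi j \<longrightarrow> (beta j x)^2 \<le> e^2)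
      \<and> (2 * phi j \<le> x \<longrightarrow> (beta j x)^2 \<ge> 1 - e^2)"
    and J: "1 \<le> j \<and> j \<le> m - 1 \<and> phi j \<le> x \<and> x < phi (j - 1)"
  have "j + 1 \<le> m" using J m by linarith
  then show "(Bfun beta beta' j x)^2 + (Bfun beta beta' (j + 1) x)^2 \<ge> 1 - 1 * real j * e^2"
    using key[OF _ _ e H] J by blast
qed

end
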